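(* For all integers $a,b\ge0$ and all $M\in\mathcal M_2(a,b)$ we have $\psi(M)=-1$ if $a=0$ and $b\ge1$, and $\psi(M)=1$ otherwise.
   Context: $\mathcal M_2(a,b)$ is the set of $M\in\mathrm{GL}_2(\mathbb Z_2)$ such that the kernel of $M-I$ on $(\mathbb Q_2/\mathbb Z_2)^2$ is isomorphic to $\mathbb Z/2^a\mathbb Z\times\mathbb Z/2^{a+b}\mathbb Z$. $\psi$ is the unique non-trivial character $\mathrm{GL}_2(\mathbb Z/2\mathbb Z)\to\{\pm1\}$ (the sign character under an isomorphism with $S_3$), evaluated on $M$ via reduction modulo $2$. *)

theory Defs
  imports "HOL-Algebra.Algebra" "HOL-Combinatorics.Permutations"
begin

text \<open>2-adic integers, represented by their coherent sequences of canonical residues: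
  x n is the residue of x modulo 2^n, in [0, 2^n).\<close>
type_synonym z2 = "nat \<Rightarrow> int"

definition Z2 :: "z2 set" where
  "Z2 = {x. \<forall>n. 0 \<le> x n \<and> x n < 2^n \<and> x (Suc n) mod 2^n = x n}"

definition z2add :: "z2 \<Rightarrow> z2 \<Rightarrow> z2" where
  "z2add x y = (\<lambda>n. (x n + y n) mod 2^n)"

definition z2mul :: "z2 \<Rightarrow> z2 \<Rightarrow> z2" where
  "z2mul x y = (\<lambda>n. (x n * y n) mod 2^n)"

definition z2zero :: z2 where "z2zero = (\<lambda>n. 0)"
definition z2one :: z2 where "z2one = (\<lambda>n. 1 mod 2^n)"

text \<open>2x2 matrices over Z_2, written (m11, m12, m21, m22).\<close>
type_synonym mat2 = "z2 \<times> z2 \<times> z2 \<times> z2"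

definition mat2_in :: "mat2 \<Rightarrow> bool" where
  "mat2_in M = (case M of (a, b, c, d) \<Rightarrow> a \<in> Z2 \<and> b \<in> Z2 \<and> c \<in> Z2 \<and> d \<in> Z2)"

definition mat2_mul :: "mat2 \<Rightarrow> mat2 \<Rightarrow> mat2" where
  "mat2_mul M N = (case M of (a, b, c, d) \<Rightarrow> case N of (e, f, g, h) \<Rightarrow>
     (z2add (z2mul a e) (z2mul b g), z2add (z2mul a f) (z2mul b h),
      z2add (z2mul c e) (z2mul d g), z2add (z2mul c f) (z2mul d h)))"

definition mat2_id :: mat2 where "mat2_id = (z2one, z2zero, z2zero, z2one)"

definition GL2Z2 :: "mat2 set" where
  "GL2Z2 = {M. mat2_in M \<and> (\<exists>N. mat2_in N \<and> mat2_mul M N = mat2_id \<and> mat2_mul N M = mat2_id)}"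

text \<open>Q_2/Z_2, represented by the rationals in [0,1) with 2-power denominator; addition mod 1.\<close>
definition Q2Z2 :: "rat set" where
  "Q2Z2 = {q. 0 \<le> q \<and> q < 1 \<and> (\<exists>n::nat. (2::rat)^n * q \<in> \<int>)}"

definition den2 :: "rat \<Rightarrow> nat" where
  "den2 q = (LEAST n. (2::rat)^n * q \<in> \<int>)"

definition z2act :: "z2 \<Rightarrow> rat \<Rightarrow> rat" where
  "z2act x q = frac (of_int (x (den2 q)) * q)"

definition kerMI :: "mat2 \<Rightarrow> (rat \<times> rat) set" where
  "kerMI M = (case M of (a, b, c, d) \<Rightarrow>
     {(u, v). u \<in> Q2Z2 \<and> v \<in> Q2Z2 \<and>
        frac (z2act a u + z2act b v) = u \<and> frac (z2act c u + z2act d v) = v})"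

definition QZ2sq_group :: "(rat \<times> rat) set \<Rightarrow> (rat \<times> rat) monoid" where
  "QZ2sq_group K = \<lparr>carrier = K,
     monoid.mult = (\<lambda>x y. (frac (fst x + fst y), frac (snd x + snd y))),
     one = (0, 0)\<rparr>"

definition M2 :: "nat \<Rightarrow> nat \<Rightarrow> mat2 set" where
  "M2 a b = {M \<in> GL2Z2. QZ2sq_group (kerMI M) \<cong>
       DirProd (integer_mod_group (2^a)) (integer_mod_group (2^(a+b)))}"

text \<open>The sign character of GL_2(F_2) = S_3: sign of the permutation of the three
  nonzero vectors of F_2^2 induced by the reduction of M modulo 2.\<close>
definition F2nz :: "(int \<times> int) set" where
  "F2nz = {(1, 0), (0, 1), (1, 1)}"

definition psi :: "mat2 \<Rightarrow> int" where
  "psi M = (case M of (a, b, c, d) \<Rightarrow>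
     sign (\<lambda>v. if v \<in> F2nz
               then ((a 1 * fst v + b 1 * snd v) mod 2, (c 1 * fst v + d 1 * snd v) mod 2)
               else v))"

end

theory Submission
  imports Defs
begin


lemma z2_coh:
  assumes "x \<in> Z2" "m \<le> n" shows "x n mod 2^m = x m"
  using assms(2)
proof (induction n rule: dec_induct)
  case base
  have "0 \<le> x m" "x m < 2^m" using assms(1) by (auto simp: Z2_def)
  then show ?case by simp
next
  case (step n)
  have "x (Suc n) mod 2^n = x n" using assms(1) by (auto simp: Z2_def)
  moreover have "(2::int)^m dvd 2^n" using step(1) by (simp add: le_imp_power_dvd)
  ultimately have "x (Suc n) mod 2^m = x n mod 2^m" by (metis mod_mod_cancel)
  then show ?case using step by simp
qed

lemma pow_int_mono:
  assumes "(2::rat)^m * u \<in> \<int>" "m \<le> n" shows "(2::rat)^n * u \<in> \<int>"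
proof -
  have "(2::rat)^n * u = 2^(n-m) * (2^m * u)"
    using assms(2) by (simp add: power_add[symmetric])
  moreover obtain k where "(2::rat)^m * u = of_int k" using assms(1) by (auto elim: Ints_cases)
  ultimately have "(2::rat)^n * u = of_int (2^(n-m) * k)" by simp
  then show ?thesis by simp
qed

lemma frac_level:
  assumes "x \<in> Z2" "m \<le> n" "(2::rat)^m * u \<in> \<int>"
  shows "frac (of_int (x n) * u) = frac (of_int (x m) * u)"
proof -
  define k where "k = x n div 2^m"
  have "x n = x m + 2^m * k" using z2_coh[OF assms(1,2)] unfolding k_def
    by (metis add.commute div_mult_mod_eq mult.commute)
  then have "of_int (x n) * u = of_int (x m) * u + of_int k * ((2::rat)^m * u)"
    by (simp add: algebra_simps)
  moreover have "of_int k * ((2::rat)^m * u) \<in> \<int>" using assms(3) by simp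
  ultimately show ?thesis by (simp add: frac_add_int_right)
qed

lemma den2_props:
  assumes "u \<in> Q2Z2"
  shows "(2::rat)^(den2 u) * u \<in> \<int>" "\<And>N. (2::rat)^N * u \<in> \<int> \<Longrightarrow> den2 u \<le> N"
  using assms unfolding Q2Z2_def den2_def
  by (auto intro: LeastI_ex Least_le)

lemma z2act_level:
  assumes "x \<in> Z2" "u \<in> Q2Z2" "(2::rat)^N * u \<in> \<int>"
  shows "z2act x u = frac (of_int (x N) * u)"
  unfolding z2act_def
  using frac_level[OF assms(1) den2_props(2)[OF assms(2,3)] den2_props(1)[OF assms(2)]] by simp

lemma Q2Z2_add:
  assumes "u \<in> Q2Z2" "v \<in> Q2Z2"
  shows "frac (u + v) \<in> Q2Z2"
proof -
  obtain m where m: "(2::rat)^m * u \<in> \<int>" using assms(1) by (auto simp: Q2Z2_def)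
  obtain n where n: "(2::rat)^n * v \<in> \<int>" using assms(2) by (auto simp: Q2Z2_def)
  have "(2::rat)^(max m n) * u \<in> \<int>" "(2::rat)^(max m n) * v \<in> \<int>"
    using pow_int_mono m n by auto
  then have "(2::rat)^(max m n) * frac (u + v) \<in> \<int>"
    unfolding frac_def by (simp add: algebra_simps)
  then show ?thesis unfolding Q2Z2_def using frac_lt_1 frac_ge_0 by blast
qed

lemma z2act_add:
  assumes "x \<in> Z2" "u \<in> Q2Z2" "v \<in> Q2Z2"
  shows "z2act x (frac (u + v)) = frac (z2act x u + z2act x v)"
proof -
  obtain m where m: "(2::rat)^m * u \<in> \<int>" using assms(2) by (auto simp: Q2Z2_def)
  obtain n where n: "(2::rat)^n * v \<in> \<int>" using assms(3) by (auto simp: Q2Z2_def)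
  define N where "N = max m n"
  have u: "(2::rat)^N * u \<in> \<int>" and v: "(2::rat)^N * v \<in> \<int>"
    using pow_int_mono m n unfolding N_def by auto
  then have w: "(2::rat)^N * frac (u + v) \<in> \<int>"
    unfolding frac_def by (simp add: algebra_simps)
  have "z2act x (frac (u + v)) = frac (of_int (x N) * frac (u + v))"
    using z2act_level[OF assms(1) Q2Z2_add[OF assms(2,3)] w] .
  also have "\<dots> = frac (of_int (x N) * u + of_int (x N) * v - of_int (x N * \<lfloor>u + v\<rfloor>))"
    unfolding frac_def[of "u+v"] by (simp add: algebra_simps)
  also have "\<dots> = frac (of_int (x N) * u + of_int (x N) * v)"
    by (metis diff_conv_add_uminus frac_add_of_int_right of_int_minus)
  also have "\<dots> = frac (z2act x u + z2act x v)"
    using z2act_level[OF assms(1,2) u] z2act_level[OF assms(1,3) v] by simp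
  finally show ?thesis .
qed




definition idem :: "('a,'b) monoid_scheme \<Rightarrow> 'a set" where
  "idem G = {x \<in> carrier G. x \<otimes>\<^bsub>G\<^esub> x = x}"
definition tors :: "('a,'b) monoid_scheme \<Rightarrow> 'a set" where
  "tors G = {x \<in> carrier G. x \<otimes>\<^bsub>G\<^esub> x \<in> idem G}"

lemma iso_tors:
  assumes "h \<in> iso G H"
    and clG: "\<And>x y. x \<in> carrier G \<Longrightarrow> y \<in> carrier G \<Longrightarrow> x \<otimes>\<^bsub>G\<^esub> y \<in> carrier G"
  shows "bij_betw h (tors G) (tors H)"
proof -
  have hom: "h \<in> hom G H" and bij: "bij_betw h (carrier G) (carrier H)"
    using assms by (auto simp: iso_def)
  have mul: "\<And>x y. x \<in> carrier G \<Longrightarrow> y \<in> carrier G \<Longrightarrow> h (x \<otimes>\<^bsub>G\<^esub> y) = h x \<otimes>\<^bsub>H\<^esub> h y"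
    using hom by (auto simp: hom_def)
  have inj: "inj_on h (carrier G)" using bij by (auto simp: bij_betw_def)
  have im: "h ` carrier G = carrier H" using bij by (auto simp: bij_betw_def)
  have "inj_on h (tors G)" using inj by (rule inj_on_subset) (auto simp: tors_def)
  moreover have "h ` tors G \<subseteq> tors H"
  proof
    fix y assume "y \<in> h ` tors G"
    then obtain x where x: "x \<in> tors G" "y = h x" by auto
    define e where "e = x \<otimes>\<^bsub>G\<^esub> x"
    have xc: "x \<in> carrier G" and ec: "e \<in> carrier G" and ee: "e \<otimes>\<^bsub>G\<^esub> e = e"
      using x(1) by (auto simp: tors_def idem_def e_def)
    have "h x \<otimes>\<^bsub>H\<^esub> h x = h e" using mul[OF xc xc] e_def by simp
    moreover have "h e \<in> carrier H" using ec im by auto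
    moreover have "h e \<otimes>\<^bsub>H\<^esub> h e = h e" using mul[OF ec ec] ee by simp
    moreover have "h x \<in> carrier H" using xc im by auto
    ultimately show "y \<in> tors H" using x(2) by (auto simp: tors_def idem_def)
  qed
  moreover have "tors H \<subseteq> h ` tors G"
  proof
    fix y assume y: "y \<in> tors H"
    then obtain x where x: "x \<in> carrier G" "y = h x" using im by (auto simp: tors_def)
    define e where "e = x \<otimes>\<^bsub>G\<^esub> x"
    have ec: "e \<in> carrier G" using clG x(1) e_def by simp
    have he: "h e = y \<otimes>\<^bsub>H\<^esub> y" using mul[OF x(1) x(1)] x(2) e_def by simp
    have "h e \<otimes>\<^bsub>H\<^esub> h e = h e" using y he by (auto simp: tors_def idem_def)
    then have "h (e \<otimes>\<^bsub>G\<^esub> e) = h e" using mul[OF ec ec] by simp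
    then have "e \<otimes>\<^bsub>G\<^esub> e = e" using inj clG[OF ec ec] ec by (auto dest: inj_onD)
    then have "x \<in> tors G" using x(1) ec e_def by (auto simp: tors_def idem_def)
    then show "y \<in> h ` tors G" using x(2) by auto
  qed
  ultimately show ?thesis by (auto simp: bij_betw_def)
qed

lemma tors_DirProd: "tors (G \<times>\<times> H) = tors G \<times> tors H"
  by (auto simp: tors_def idem_def)

lemma tors_mod_pow: "card (tors (integer_mod_group (2^k))) = (if k = 0 then 1 else 2)"
proof (cases k)
  case 0
  then have "tors (integer_mod_group (2^k)) = {0}"
    by (auto simp: tors_def idem_def integer_mod_group_def)
  then show ?thesis using 0 by simp
next
  case (Suc j)
  have "tors (integer_mod_group (2^k)) = {0, 2^j}"
  proof -
    have A: "idem (integer_mod_group (2^k)) = {0}"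
    proof -
      have "x = 0" if "0 \<le> x" "x < 2^k" "(x + x) mod 2^k = x" for x :: int
      proof (cases "x + x < 2^k")
        case True
        then have "(x + x) mod 2^k = x + x" using that(1) by (simp add: mod_pos_pos_trivial)
        then show ?thesis using that(3) by simp
      next
        case False
        have "(x + x) mod 2^k = (x + x - 2^k) mod 2^k" by (simp add: mod_diff_right_eq[symmetric])
        also have "\<dots> = x + x - 2^k" using False that(2) by (intro mod_pos_pos_trivial) auto
        finally show ?thesis using that(2,3) by simp
      qed
      then show ?thesis by (auto simp: idem_def integer_mod_group_def)
    qed
    have "x \<in> {0, 2^j}" if "0 \<le> x" "x < 2^k" "2^k dvd 2 * x" for x :: int
    proof -
      have "2^k dvd (x + x)" using that(3) by simp
      then obtain t where t: "x + x = 2^k * t" by auto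
      then have "x = 2^j * t" using Suc by simp
      moreover have "0 \<le> t"
      proof (rule ccontr)
        assume "\<not> 0 \<le> t"
        then have "(2::int)^k * t < 0" by (simp add: mult_pos_neg)
        then show False using t that(1) by simp
      qed
      moreover have "t < 2"
      proof (rule ccontr)
        assume "\<not> t < 2"
        then have "(2::int)^k * 2 \<le> 2^k * t" by (intro mult_left_mono) auto
        then show False using t that(2) by linarith
      qed
      ultimately show ?thesis by (cases "t = 0") auto
    qed
    moreover have "(2^j + 2^j) mod (2::int)^k = 0" using Suc by simp
    moreover have "(2::int)^j < 2^k" using Suc by simp
    ultimately show ?thesis using A
      by (auto simp: tors_def integer_mod_group_def)
  qed
  moreover have "(0::int) \<noteq> 2^j" by simp
  ultimately show ?thesis using Suc by simp
qed




lemma z2act_zero: "z2act x 0 = 0"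
  by (simp add: z2act_def)

lemma zero_Q2Z2: "(0::rat) \<in> Q2Z2"
  unfolding Q2Z2_def by auto

lemma half_Q2Z2: "(1/2::rat) \<in> Q2Z2"
proof -
  have "(2::rat)^1 * (1/2) \<in> \<int>" by simp
  then have "\<exists>n::nat. (2::rat)^n * (1/2) \<in> \<int>" by blast
  then show ?thesis unfolding Q2Z2_def by simp
qed

lemma Z2_level1: "x \<in> Z2 \<Longrightarrow> x 1 \<in> {0,1}"
proof -
  assume "x \<in> Z2"
  then have "0 \<le> x 1 \<and> x 1 < 2^1" unfolding Z2_def by blast
  then show ?thesis by auto
qed

lemma frac_half [simp]: "frac (1/2::rat) = 1/2"
  by (simp add: frac_eq)

lemma frac_one_rat [simp]: "frac (1::rat) = 0"
  by simp

lemma z2act_half: "x \<in> Z2 \<Longrightarrow> z2act x (1/2) = of_int (x 1) / 2"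
proof -
  assume x: "x \<in> Z2"
  have "z2act x (1/2) = frac (of_int (x 1) * (1/2))"
    by (rule z2act_level[OF x half_Q2Z2]) simp
  moreover have "x 1 = 0 \<or> x 1 = 1" using Z2_level1[OF x] by simp
  ultimately show ?thesis by (elim disjE) simp_all
qed

lemma zero_ker: "(0,0) \<in> kerMI M"
  by (cases M) (auto simp: kerMI_def z2act_zero zero_Q2Z2)

lemma ker_sub: "kerMI M \<subseteq> Q2Z2 \<times> Q2Z2"
  by (cases M) (auto simp: kerMI_def)

lemma frac_ff: "frac (frac a + frac b) = frac (a + b)"
  by simp

lemma ker_closed:
  assumes "mat2_in M" "x \<in> kerMI M" "y \<in> kerMI M"
  shows "x \<otimes>\<^bsub>QZ2sq_group (kerMI M)\<^esub> y \<in> kerMI M"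
proof -
  obtain p q r s where M: "M = (p,q,r,s)" by (cases M) auto
  have Z: "p \<in> Z2" "q \<in> Z2" "r \<in> Z2" "s \<in> Z2" using assms(1) M by (auto simp: mat2_in_def)
  obtain u v where x: "x = (u,v)" by (cases x)
  obtain u' v' where y: "y = (u',v')" by (cases y)
  have xs: "u \<in> Q2Z2" "v \<in> Q2Z2" "frac (z2act p u + z2act q v) = u" "frac (z2act r u + z2act s v) = v"
    using assms(2) M x by (auto simp: kerMI_def)
  have ys: "u' \<in> Q2Z2" "v' \<in> Q2Z2" "frac (z2act p u' + z2act q v') = u'" "frac (z2act r u' + z2act s v') = v'"
    using assms(3) M y by (auto simp: kerMI_def)
  have e1: "frac (z2act p (frac (u+u')) + z2act q (frac (v+v'))) = frac (u + u')"
  proof -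
    have "frac (z2act p (frac (u+u')) + z2act q (frac (v+v')))
        = frac (frac (z2act p u + z2act p u') + frac (z2act q v + z2act q v'))"
      using z2act_add Z xs ys by simp
    also have "\<dots> = frac ((z2act p u + z2act q v) + (z2act p u' + z2act q v'))"
      unfolding frac_ff by (rule arg_cong[where f=frac]) (simp add: algebra_simps)
    also have "\<dots> = frac (frac (z2act p u + z2act q v) + frac (z2act p u' + z2act q v'))"
      by simp
    finally show ?thesis using xs ys by simp
  qed
  have e2: "frac (z2act r (frac (u+u')) + z2act s (frac (v+v'))) = frac (v + v')"
  proof -
    have "frac (z2act r (frac (u+u')) + z2act s (frac (v+v')))
        = frac (frac (z2act r u + z2act r u') + frac (z2act s v + z2act s v'))"
      using z2act_add Z xs ys by simp
    also have "\<dots> = frac ((z2act r u + z2act s v) + (z2act r u' + z2act s v'))"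
      unfolding frac_ff by (rule arg_cong[where f=frac]) (simp add: algebra_simps)
    also have "\<dots> = frac (frac (z2act r u + z2act s v) + frac (z2act r u' + z2act s v'))"
      by simp
    finally show ?thesis using xs ys by simp
  qed
  show ?thesis using e1 e2 Q2Z2_add xs ys M x y
    by (auto simp: kerMI_def QZ2sq_group_def)
qed

lemma idem_QZ:
  assumes "(0,0) \<in> K" "K \<subseteq> Q2Z2 \<times> Q2Z2"
  shows "idem (QZ2sq_group K) = {(0,0)}"
proof -
  have z: "w = 0" if "w \<in> Q2Z2" "frac (w + w) = w" for w
  proof -
    have "0 \<le> w" "w < 1" using that(1) by (auto simp: Q2Z2_def)
    have "w = w + w - of_int \<lfloor>w + w\<rfloor>" using that(2) by (simp add: frac_def)
    then have n: "w = of_int \<lfloor>w + w\<rfloor>" by simp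
    define n where "n = \<lfloor>w + w\<rfloor>"
    have "0 \<le> n" "n < 1" using n \<open>0 \<le> w\<close> \<open>w < 1\<close> unfolding n_def by linarith+
    then have "n = 0" by simp
    then show ?thesis using n unfolding n_def by simp
  qed
  show ?thesis using assms z by (auto simp: idem_def QZ2sq_group_def)
qed

lemma half_cases:
  assumes "w \<in> Q2Z2" shows "frac (w + w) = 0 \<longleftrightarrow> w \<in> {0, 1/2}"
proof
  assume "frac (w + w) = 0"
  then have "w + w \<in> \<int>" by simp
  then obtain n where n: "w + w = of_int n" by (auto elim: Ints_cases)
  have "0 \<le> w" "w < 1" using assms by (auto simp: Q2Z2_def)
  then have "0 \<le> n" "n < 2" using n by linarith+
  then have "n = 0 \<or> n = 1" by auto
  then show "w \<in> {0, 1/2}" using n by auto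
next
  assume "w \<in> {0, 1/2}"
  then consider "w = 0" | "w = 1/2" by blast
  then show "frac (w + w) = 0"
  proof cases
    case 2
    then have ww: "w + w = 1" by simp
    show ?thesis unfolding ww by simp
  qed simp
qed

lemma tors_QZ:
  assumes "(0,0) \<in> K" "K \<subseteq> Q2Z2 \<times> Q2Z2"
  shows "tors (QZ2sq_group K) = {(u,v) \<in> K. u \<in> {0,1/2} \<and> v \<in> {0,1/2}}"
proof -
  have "tors (QZ2sq_group K) = {(u,v) \<in> K. frac (u+u) = 0 \<and> frac (v+v) = 0}"
    using idem_QZ[OF assms] by (auto simp: tors_def QZ2sq_group_def)
  also have "\<dots> = {(u,v) \<in> K. u \<in> {0,1/2} \<and> v \<in> {0,1/2}}"
    using assms(2) half_cases by blast
  finally show ?thesis .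
qed




definition hv :: "int \<Rightarrow> rat \<Rightarrow> rat" where
  "hv c u = (if u = 0 then 0 else of_int c / 2)"

definition Fset :: "int \<Rightarrow> int \<Rightarrow> int \<Rightarrow> int \<Rightarrow> (rat \<times> rat) set" where
  "Fset P Q R S = {(u,v). u \<in> {0,1/2} \<and> v \<in> {0,1/2} \<and>
      frac (hv P u + hv Q v) = u \<and> frac (hv R u + hv S v) = v}"

definition fperm :: "int \<Rightarrow> int \<Rightarrow> int \<Rightarrow> int \<Rightarrow> int \<times> int \<Rightarrow> int \<times> int" where
  "fperm P Q R S = (\<lambda>v. if v \<in> F2nz
               then ((P * fst v + Q * snd v) mod 2, (R * fst v + S * snd v) mod 2)
               else v)"

lemma frac_half' [simp]: "frac (1/2::rat) = 1/2"
  by (simp add: frac_eq)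

lemma fset_eval:
  "Fset P Q R S = {w \<in> {(0,0),(0,1/2),(1/2,0),(1/2,1/2)}.
      frac (hv P (fst w) + hv Q (snd w)) = fst w \<and> frac (hv R (fst w) + hv S (snd w)) = snd w}"
  unfolding Fset_def by auto

lemma case_I: "card (Fset 1 0 0 1) = 4" "sign (fperm 1 0 0 1) = 1"
proof -
  have "Fset 1 0 0 1 = {(0,0),(0,1/2),(1/2,0),(1/2,1/2)}"
    unfolding fset_eval by (auto simp: hv_def)
  then show "card (Fset 1 0 0 1) = 4" by simp
  have "fperm 1 0 0 1 = id" by (auto simp: fperm_def F2nz_def)
  then show "sign (fperm 1 0 0 1) = 1" by simp
qed

lemma case_0: "card (Fset 0 1 1 0) = 2" "sign (fperm 0 1 1 0) = -1"
proof -
  have "Fset 0 1 1 0 = {(0,0),(1/2,1/2)}"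
    unfolding fset_eval by (auto simp: hv_def)
  then show "card (Fset 0 1 1 0) = 2" by simp
  have "fperm 0 1 1 0 = transpose (1,0) (0,1)"
    by (auto simp: fperm_def F2nz_def transpose_def fun_eq_iff)
  then show "sign (fperm 0 1 1 0) = -1" by (simp add: sign_swap_id)
qed

lemma case_1: "card (Fset 1 1 0 1) = 2" "sign (fperm 1 1 0 1) = -1"
proof -
  have "Fset 1 1 0 1 = {(0,0),(1/2,0)}"
    unfolding fset_eval by (auto simp: hv_def)
  then show "card (Fset 1 1 0 1) = 2" by simp
  have "fperm 1 1 0 1 = transpose (0,1) (1,1)"
    by (auto simp: fperm_def F2nz_def transpose_def fun_eq_iff)
  then show "sign (fperm 1 1 0 1) = -1" by (simp add: sign_swap_id)
qed

lemma case_2: "card (Fset 1 0 1 1) = 2" "sign (fperm 1 0 1 1) = -1"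
proof -
  have "Fset 1 0 1 1 = {(0,0),(0,1/2)}"
    unfolding fset_eval by (auto simp: hv_def)
  then show "card (Fset 1 0 1 1) = 2" by simp
  have "fperm 1 0 1 1 = transpose (1,0) (1,1)"
    by (auto simp: fperm_def F2nz_def transpose_def fun_eq_iff)
  then show "sign (fperm 1 0 1 1) = -1" by (simp add: sign_swap_id)
qed

lemma case_3: "card (Fset 0 1 1 1) = 1" "sign (fperm 0 1 1 1) = 1"
proof -
  have "Fset 0 1 1 1 = {(0,0)}"
    unfolding fset_eval by (auto simp: hv_def)
  then show "card (Fset 0 1 1 1) = 1" by simp
  have "fperm 0 1 1 1 = transpose (1,0) (0,1) \<circ> transpose (0,1) (1,1)"
    by (auto simp: fperm_def F2nz_def transpose_def fun_eq_iff)
  then show "sign (fperm 0 1 1 1) = 1" by (simp add: sign_compose permutation_swap_id sign_swap_id)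
qed

lemma case_4: "card (Fset 1 1 1 0) = 1" "sign (fperm 1 1 1 0) = 1"
proof -
  have "Fset 1 1 1 0 = {(0,0)}"
    unfolding fset_eval by (auto simp: hv_def)
  then show "card (Fset 1 1 1 0) = 1" by simp
  have "fperm 1 1 1 0 = transpose (0,1) (1,1) \<circ> transpose (1,0) (0,1)"
    by (auto simp: fperm_def F2nz_def transpose_def fun_eq_iff)
  then show "sign (fperm 1 1 1 0) = 1" by (simp add: sign_compose permutation_swap_id sign_swap_id)
qed

lemma cases_all:
  assumes "P \<in> {0,1}" "Q \<in> {0,1}" "R \<in> {0,1}" "S \<in> {0,1}" "odd (P*S - Q*R)"
  shows "(card (Fset P Q R S) = 4 \<and> sign (fperm P Q R S) = 1) \<or>
         (card (Fset P Q R S) = 2 \<and> sign (fperm P Q R S) = -1) \<or>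
         (card (Fset P Q R S) = 1 \<and> sign (fperm P Q R S) = 1)"
  using assms case_I case_0 case_1 case_2 case_3 case_4 by auto




lemma zh: "x \<in> Z2 \<Longrightarrow> u \<in> {0,1/2} \<Longrightarrow> z2act x u = hv (x 1) u"
proof -
  assume x: "x \<in> Z2" and "u \<in> {0,1/2}"
  then have "u = 0 \<or> u = 1/2" by simp
  then show ?thesis by (elim disjE; hypsubst; simp add: hv_def z2act_zero z2act_half[OF x])
qed

lemma carrier_QZ [simp]: "carrier (QZ2sq_group K) = K"
  by (simp add: QZ2sq_group_def)

lemma det_odd:
  assumes "M \<in> GL2Z2" "M = (p,q,r,s)"
  shows "odd (p 1 * s 1 - q 1 * r 1)"
proof -
  obtain N where N: "mat2_mul M N = mat2_id" using assms(1) by (auto simp: GL2Z2_def)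
  obtain e f g k where Ne: "N = (e,f,g,k)" by (cases N) auto
  have eqs: "z2add (z2mul p e) (z2mul q g) = z2one" "z2add (z2mul p f) (z2mul q k) = z2zero"
     "z2add (z2mul r e) (z2mul s g) = z2zero" "z2add (z2mul r f) (z2mul s k) = z2one"
    using N unfolding assms(2) Ne mat2_mul_def mat2_id_def by simp_all
  have A: "(p 1 * e 1 + q 1 * g 1) mod 2 = 1"
    using fun_cong[OF eqs(1), of 1] by (simp add: z2add_def z2mul_def z2one_def mod_add_eq)
  have B: "(p 1 * f 1 + q 1 * k 1) mod 2 = 0"
    using fun_cong[OF eqs(2), of 1] by (simp add: z2add_def z2mul_def z2zero_def mod_add_eq)
  have C: "(r 1 * e 1 + s 1 * g 1) mod 2 = 0"
    using fun_cong[OF eqs(3), of 1] by (simp add: z2add_def z2mul_def z2zero_def mod_add_eq)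
  have D: "(r 1 * f 1 + s 1 * k 1) mod 2 = 1"
    using fun_cong[OF eqs(4), of 1] by (simp add: z2add_def z2mul_def z2one_def mod_add_eq)
  define XX where "XX = p 1 * e 1 + q 1 * g 1"
  define YY where "YY = r 1 * f 1 + s 1 * k 1"
  define ZZ where "ZZ = p 1 * f 1 + q 1 * k 1"
  define WW where "WW = r 1 * e 1 + s 1 * g 1"
  have "odd XX" "odd YY" "even ZZ" using A B D unfolding XX_def YY_def ZZ_def by (simp_all add: odd_iff_mod_2_eq_one even_iff_mod_2_eq_zero)
  then have "odd (XX * YY - ZZ * WW)" by simp
  moreover have "XX * YY - ZZ * WW = (p 1 * s 1 - q 1 * r 1) * (e 1 * k 1 - f 1 * g 1)"
    unfolding XX_def YY_def ZZ_def WW_def by (simp add: algebra_simps)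
  ultimately show ?thesis by simp
qed

theorem lemma6p3:
  fixes a b :: nat and M :: mat2
  assumes "M \<in> M2 a b"
  shows "psi M = (if a = 0 \<and> b \<ge> 1 then -1 else 1)"
proof -
  obtain p q r s where M: "M = (p,q,r,s)" by (cases M) auto
  have GL: "M \<in> GL2Z2" using assms by (simp add: M2_def)
  then have Z: "p \<in> Z2" "q \<in> Z2" "r \<in> Z2" "s \<in> Z2" using M by (auto simp: GL2Z2_def mat2_in_def)
  have min: "mat2_in M" using GL by (simp add: GL2Z2_def)
  obtain h where h: "h \<in> iso (QZ2sq_group (kerMI M))
       (integer_mod_group (2^a) \<times>\<times> integer_mod_group (2^(a+b)))"
    using assms by (auto simp: M2_def is_iso_def)
  have bij: "bij_betw h (tors (QZ2sq_group (kerMI M)))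
       (tors (integer_mod_group (2^a) \<times>\<times> integer_mod_group (2^(a+b))))"
    by (rule iso_tors[OF h]) (use ker_closed[OF min] in simp)
  define c :: "nat \<Rightarrow> nat" where "c k = (if k = 0 then 1 else 2)" for k
  have card1: "card (tors (QZ2sq_group (kerMI M))) = c a * c (a+b)"
    using bij_betw_same_card[OF bij] unfolding tors_DirProd card_cartesian_product tors_mod_pow c_def
    by simp
  have "tors (QZ2sq_group (kerMI M)) = {(u,v) \<in> kerMI M. u \<in> {0,1/2} \<and> v \<in> {0,1/2}}"
    using tors_QZ[OF zero_ker ker_sub] .
  also have "\<dots> = Fset (p 1) (q 1) (r 1) (s 1)"
  proof -
    have Q: "u \<in> {0,1/2} \<Longrightarrow> u \<in> Q2Z2" for u
    proof -
      assume "u \<in> {0,1/2}"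
      then have "u = 0 \<or> u = 1/2" by simp
      then show ?thesis by (elim disjE; hypsubst; simp add: zero_Q2Z2 half_Q2Z2)
    qed
    show ?thesis unfolding Fset_def M kerMI_def
      using Q zh[OF Z(1)] zh[OF Z(2)] zh[OF Z(3)] zh[OF Z(4)] by auto
  qed
  finally have card2: "card (Fset (p 1) (q 1) (r 1) (s 1)) = c a * c (a+b)" using card1 by simp
  have psi: "psi M = sign (fperm (p 1) (q 1) (r 1) (s 1))"
    unfolding psi_def M fperm_def by simp
  have cs: "(card (Fset (p 1) (q 1) (r 1) (s 1)) = 4 \<and> psi M = 1) \<or>
         (card (Fset (p 1) (q 1) (r 1) (s 1)) = 2 \<and> psi M = -1) \<or>
         (card (Fset (p 1) (q 1) (r 1) (s 1)) = 1 \<and> psi M = 1)"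
    unfolding psi using cases_all Z2_level1[OF Z(1)] Z2_level1[OF Z(2)] Z2_level1[OF Z(3)]
      Z2_level1[OF Z(4)] det_odd[OF GL M] by blast
  show ?thesis using cs card2 unfolding c_def by (auto split: if_splits)
qed


end
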